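(* Let $\overrightarrow{W}$ be a Morse sequence on a simplicial complex $K$, with reference map $\curlywedge$ and coreference map $\curlyvee$. Let $\kappa$ be a critical simplex of $\overrightarrow{W}$ and $\nu\in K$. Then (1) $\kappa\in\curlywedge(\nu)$ if and only if the number of gradient paths in $\overrightarrow{W}$ from $\nu$ to $\kappa$ is odd; (2) $\kappa\in\curlyvee(\nu)$ if and only if the number of cogradient paths in $\overrightarrow{W}$ from $\kappa$ to $\nu$ is odd.
   Context: A simplicial complex $K$ is a finite collection of non-empty finite sets closed under taking non-empty subsets; members are simplices, $\dim\sigma=|\sigma|-1$, $K^{(p)}$ is the set of $p$-simplices, a facet is a maximal simplex. A pair $(\sigma,\tau)$ with $\sigma\subsetneq\tau$ is a free pair for $K$ if $\tau$ is the only simplex of $K$ other than $\sigma$ containing $\sigma$; then $K$ is an elementary expansion of $K\setminus\{\sigma,\tau\}$. If $\nu$ is a facet of $K$, $K$ is an elementary filling of $K\setminus\{\nu\}$. A Morse sequence on $K$ is a sequence $\langle\emptyset=K_0,\dots,K_k=K\rangle$ with each $K_i$ an elementary expansion or elementary filling of $K_{i-1}$. A simplex added by a filling is critical; if $K_i=K_{i-1}\cup\{\sigma,\tau\}$ is an expansion with $\sigma\subset\tau$, $(\sigma,\tau)$ is a regular pair, $\sigma$ is lower regular and $\tau$ upper regular. Chains mod 2: $K[p]$ is the $\mathbb{Z}_2$-vector space of subsets of $K^{(p)}$ (sum = symmetric difference, empty chain $=0$). For $\sigma\in K^{(p)}$, $\partial(\sigma)=\{\tau\in K^{(p-1)}:\tau\subset\sigma\}$,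 $\delta(\sigma)=\{\tau\in K^{(p+1)}:\sigma\subset\tau\}$. The reference map $\curlywedge$ is the unique map assigning to each $p$-simplex $\nu$ a set $\curlywedge(\nu)$ of critical $p$-simplices, extended linearly to chains ($\curlywedge(c)=\sum_{\nu\in c}\curlywedge(\nu)$ mod 2), such that $\curlywedge(\nu)=\{\nu\}$ for critical $\nu$, and $\curlywedge(\tau)=0$, $\curlywedge(\partial(\tau))=0$ for every upper regular $\tau$. The coreference map $\curlyvee$ is the unique such map with $\curlyvee(\nu)=\{\nu\}$ for critical $\nu$ and $\curlyvee(\sigma)=0$, $\curlyvee(\delta(\sigma))=0$ for every lower regular $\sigma$. A gradient path in $\overrightarrow{W}$ from $\sigma_0$ to $\sigma_k$ is a sequence $\langle\sigma_0,\tau_0,\dots,\sigma_{k-1},\tau_{k-1},\sigma_k\rangle$, $k\ge0$, with $\sigma_i\in K^{(p)}$, $\tau_i\in K^{(p+1)}$, such that for each $i\in[0,k-1]$, $(\sigma_i,\tau_i)$ is a regular pair and $\sigma_{i+1}\in\partial(\tau_i)$ with $\sigma_{i+1}\neq\sigma_i$. A cogradient path from $\tau_0$ to $\tau_k$ is a sequence $\langle\tau_0,\sigma_1,\tau_1,\dots,\sigma_k,\tau_k\rangle$, $k\ge0$, with $\tau_i\in K^{(p)}$, $\sigma_i\in K^{(p-1)}$, such that for each $i\in[1,k]$, $(\sigma_i,\tau_i)$ is a regular pair and $\tau_{i-1}\in\delta(\sigma_i)$ with $\tau_i\neq\tau_{i-1}$. (Paths with $k=0$ are trivial paths $\langle\sigma_0\rangle$.)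 *)

theory Defs
  imports Main
begin

text \<open>Simplices are finite non-empty sets of vertices; a complex is a set of simplices.
  dim sigma = card sigma - 1, so "sigma is a p-simplex" is "card sigma = p + 1".\<close>

definition simplicial_complex :: "'a set set \<Rightarrow> bool" where
  "simplicial_complex K \<longleftrightarrow> finite K \<and> (\<forall>\<sigma>\<in>K. finite \<sigma> \<and> \<sigma> \<noteq> {}) \<and>
     (\<forall>\<sigma>\<in>K. \<forall>\<tau>. \<tau> \<noteq> {} \<and> \<tau> \<subseteq> \<sigma> \<longrightarrow> \<tau> \<in> K)"

definition free_pair :: "'a set set \<Rightarrow> 'a set \<Rightarrow> 'a set \<Rightarrow> bool" where
  "free_pair K \<sigma> \<tau> \<longleftrightarrow> \<sigma> \<subset> \<tau> \<and> \<sigma> \<in> K \<and> \<tau> \<in> K \<and>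
     (\<forall>\<rho>\<in>K. \<sigma> \<subseteq> \<rho> \<and> \<rho> \<noteq> \<sigma> \<longrightarrow> \<rho> = \<tau>)"

definition facet :: "'a set set \<Rightarrow> 'a set \<Rightarrow> bool" where
  "facet K \<nu> \<longleftrightarrow> \<nu> \<in> K \<and> (\<forall>\<rho>\<in>K. \<nu> \<subseteq> \<rho> \<longrightarrow> \<rho> = \<nu>)"

text \<open>A step of a Morse sequence: an elementary filling adding a critical simplex,
  or an elementary expansion adding a regular pair (sigma, tau).\<close>
datatype 'a step = Fill "'a set" | Expand "'a set" "'a set"

fun added :: "'a step \<Rightarrow> 'a set set" where
  "added (Fill \<nu>) = {\<nu>}"
| "added (Expand \<sigma> \<tau>) = {\<sigma>, \<tau>}"

definition stage :: "'a step list \<Rightarrow> nat \<Rightarrow> 'a set set" where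
  "stage W i = (\<Union>s\<in>set (take i W). added s)"

fun valid_step :: "'a set set \<Rightarrow> 'a set set \<Rightarrow> 'a step \<Rightarrow> bool" where
  "valid_step Kprev Knew (Fill \<nu>) \<longleftrightarrow>
     simplicial_complex Knew \<and> facet Knew \<nu> \<and> Kprev = Knew - {\<nu>}"
| "valid_step Kprev Knew (Expand \<sigma> \<tau>) \<longleftrightarrow>
     simplicial_complex Knew \<and> free_pair Knew \<sigma> \<tau> \<and> Kprev = Knew - {\<sigma>, \<tau>}"

definition morse_sequence_on :: "'a step list \<Rightarrow> 'a set set \<Rightarrow> bool" where
  "morse_sequence_on W K \<longleftrightarrow> stage W (length W) = K \<and>
     (\<forall>i < length W. valid_step (stage W i) (stage W (Suc i)) (W ! i))"

definition critical :: "'a step list \<Rightarrow> 'a set set" where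
  "critical W = {\<nu>. Fill \<nu> \<in> set W}"

definition regular_pair :: "'a step list \<Rightarrow> 'a set \<Rightarrow> 'a set \<Rightarrow> bool" where
  "regular_pair W \<sigma> \<tau> \<longleftrightarrow> Expand \<sigma> \<tau> \<in> set W"

definition lower_regular :: "'a step list \<Rightarrow> 'a set set" where
  "lower_regular W = {\<sigma>. \<exists>\<tau>. regular_pair W \<sigma> \<tau>}"

definition upper_regular :: "'a step list \<Rightarrow> 'a set set" where
  "upper_regular W = {\<tau>. \<exists>\<sigma>. regular_pair W \<sigma> \<tau>}"

text \<open>Boundary and coboundary (as Z_2 chains = sets of simplices of K).\<close>
definition bd :: "'a set set \<Rightarrow> 'a set \<Rightarrow> 'a set set" where
  "bd K \<sigma> = {\<tau> \<in> K. \<tau> \<subseteq> \<sigma> \<and> card \<tau> + 1 = card \<sigma>}"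

definition cobd :: "'a set set \<Rightarrow> 'a set \<Rightarrow> 'a set set" where
  "cobd K \<sigma> = {\<tau> \<in> K. \<sigma> \<subseteq> \<tau> \<and> card \<tau> = card \<sigma> + 1}"

text \<open>Linear (mod 2) extension of a map on simplices to chains.\<close>
definition lin :: "('a set \<Rightarrow> 'a set set) \<Rightarrow> 'a set set \<Rightarrow> 'a set set" where
  "lin f c = {\<kappa>. odd (card {\<nu> \<in> c. \<kappa> \<in> f \<nu>})}"

definition is_reference_map :: "'a step list \<Rightarrow> 'a set set \<Rightarrow> ('a set \<Rightarrow> 'a set set) \<Rightarrow> bool" where
  "is_reference_map W K f \<longleftrightarrow>
     (\<forall>\<nu>\<in>K. f \<nu> \<subseteq> {\<kappa> \<in> critical W. card \<kappa> = card \<nu>}) \<and>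
     (\<forall>\<nu>\<in>critical W. f \<nu> = {\<nu>}) \<and>
     (\<forall>\<tau>\<in>upper_regular W. f \<tau> = {} \<and> lin f (bd K \<tau>) = {})"

definition is_coreference_map :: "'a step list \<Rightarrow> 'a set set \<Rightarrow> ('a set \<Rightarrow> 'a set set) \<Rightarrow> bool" where
  "is_coreference_map W K f \<longleftrightarrow>
     (\<forall>\<nu>\<in>K. f \<nu> \<subseteq> {\<kappa> \<in> critical W. card \<kappa> = card \<nu>}) \<and>
     (\<forall>\<nu>\<in>critical W. f \<nu> = {\<nu>}) \<and>
     (\<forall>\<sigma>\<in>lower_regular W. f \<sigma> = {} \<and> lin f (cobd K \<sigma>) = {})"

text \<open>Gradient paths <s_0, t_0, ..., s_(k-1), t_(k-1), s_k> from a to b,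
  encoded as the pair of lists ([s_0..s_k], [t_0..t_(k-1)]).\<close>
definition gradient_paths :: "'a step list \<Rightarrow> 'a set set \<Rightarrow> 'a set \<Rightarrow> 'a set \<Rightarrow> ('a set list \<times> 'a set list) set" where
  "gradient_paths W K a b = {(ss, ts). \<exists>p::nat.
     length ss = length ts + 1 \<and> ss ! 0 = a \<and> ss ! length ts = b \<and>
     (\<forall>i \<le> length ts. ss ! i \<in> K \<and> card (ss ! i) = p + 1) \<and>
     (\<forall>i < length ts. ts ! i \<in> K \<and> card (ts ! i) = p + 2 \<and>
        regular_pair W (ss ! i) (ts ! i) \<and> ss ! Suc i \<in> bd K (ts ! i) \<and> ss ! Suc i \<noteq> ss ! i)}"

text \<open>Cogradient paths <t_0, s_1, t_1, ..., s_k, t_k> from a to b,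
  encoded as the pair of lists ([t_0..t_k], [s_1..s_k]).\<close>
definition cogradient_paths :: "'a step list \<Rightarrow> 'a set set \<Rightarrow> 'a set \<Rightarrow> 'a set \<Rightarrow> ('a set list \<times> 'a set list) set" where
  "cogradient_paths W K a b = {(ts, ss). \<exists>p::nat.
     length ts = length ss + 1 \<and> ts ! 0 = a \<and> ts ! length ss = b \<and>
     (\<forall>i \<le> length ss. ts ! i \<in> K \<and> card (ts ! i) = p + 1) \<and>
     (\<forall>i < length ss. ss ! i \<in> K \<and> card (ss ! i) + 1 = p + 1 \<and>
        regular_pair W (ss ! i) (ts ! Suc i) \<and> ts ! i \<in> cobd K (ss ! i) \<and> ts ! Suc i \<noteq> ts ! i)}"

end

theory Submission
  imports Defs
begin


definition rank :: "'a step list \<Rightarrow> 'a set \<Rightarrow> nat" where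
  "rank W x = (LEAST i. x \<in> stage W i)"

lemma stage_Suc: "i < length W \<Longrightarrow> stage W (Suc i) = stage W i \<union> added (W!i)"
  by (auto simp add: stage_def take_Suc_conv_app_nth)

lemma stage_mono: "i \<le> j \<Longrightarrow> stage W i \<subseteq> stage W j"
  unfolding stage_def using set_take_subset_set_take by fastforce

lemma valid_step_facts:
  "valid_step Kp Kn s \<Longrightarrow> Kp = Kn - added s \<and> added s \<subseteq> Kn \<and> simplicial_complex Kn"
  by (cases s) (auto simp: facet_def free_pair_def)

lemma stage_len: "stage W (length W) = (\<Union>s\<in>set W. added s)"
  by (simp add: stage_def)

lemma stage_sub: "morse_sequence_on W K \<Longrightarrow> stage W i \<subseteq> K"
  unfolding morse_sequence_on_def stage_def by (auto dest: in_set_takeD)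

lemma added_rank:
  assumes m: "morse_sequence_on W K" and i: "i < length W" and x: "x \<in> added (W!i)"
  shows "rank W x = Suc i"
proof -
  have v: "valid_step (stage W i) (stage W (Suc i)) (W!i)" using m i by (simp add: morse_sequence_on_def)
  have "x \<in> stage W (Suc i)" using stage_Suc[OF i] x by auto
  moreover have "x \<notin> stage W i" using valid_step_facts[OF v] x by auto
  hence "\<And>y. x \<in> stage W y \<Longrightarrow> Suc i \<le> y"
    using stage_mono by (metis not_less_eq_eq subsetD)
  ultimately show ?thesis unfolding rank_def by (intro Least_equality) auto
qed

lemma added_unique:
  assumes m: "morse_sequence_on W K" and "i < length W" "j < length W"
    "x \<in> added (W!i)" "x \<in> added (W!j)"
  shows "i = j"
  using added_rank[OF m] assms by (metis Suc_inject)

lemma K_cover: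
  assumes m: "morse_sequence_on W K" and x: "x \<in> K"
  shows "\<exists>i<length W. x \<in> added (W!i)"
proof -
  have "x \<in> (\<Union>s\<in>set W. added s)" using m x stage_len by (metis morse_sequence_on_def)
  then show ?thesis by (auto simp: in_set_conv_nth)
qed

lemma stage_rank:
  assumes m: "morse_sequence_on W K" and x: "x \<in> K"
  shows "x \<in> stage W j \<longleftrightarrow> rank W x \<le> j"
proof -
  obtain i where i: "i < length W" "x \<in> added (W!i)" using K_cover[OF m x] by blast
  have r: "rank W x = Suc i" using added_rank[OF m i] .
  have "x \<in> stage W (Suc i)" using stage_Suc[OF i(1)] i(2) by auto
  moreover have "x \<notin> stage W i"
    using valid_step_facts[of "stage W i" "stage W (Suc i)" "W!i"] m i
    by (auto simp: morse_sequence_on_def)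
  ultimately show ?thesis using r stage_mono
    by (metis not_less_eq_eq subsetD)
qed

lemma K_sc:
  assumes m: "morse_sequence_on W K" and "K \<noteq> {}"
  shows "simplicial_complex K"
proof -
  have "W \<noteq> []" using assms by (auto simp: morse_sequence_on_def stage_def)
  then have l: "length W - 1 < length W" "Suc (length W - 1) = length W" by auto
  then show ?thesis using m valid_step_facts
    by (metis morse_sequence_on_def)
qed

lemma sc_closed: "simplicial_complex K \<Longrightarrow> \<sigma> \<in> K \<Longrightarrow> \<tau> \<noteq> {} \<Longrightarrow> \<tau> \<subseteq> \<sigma> \<Longrightarrow> \<tau> \<in> K"
  unfolding simplicial_complex_def by blast

lemma sc_ne: "simplicial_complex K \<Longrightarrow> \<sigma> \<in> K \<Longrightarrow> finite \<sigma> \<and> \<sigma> \<noteq> {}"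
  unfolding simplicial_complex_def by blast

lemma rp_index: "regular_pair W s t \<Longrightarrow> \<exists>i<length W. W!i = Expand s t"
  by (auto simp: regular_pair_def in_set_conv_nth)

lemma rp_facts:
  assumes m: "morse_sequence_on W K" and rp: "regular_pair W s t"
  shows "s \<subset> t" "s \<in> K" "t \<in> K" "card t = Suc (card s)" "finite t" "finite s"
    "rank W s = rank W t"
    "\<And>s'. s' \<in> bd K t \<Longrightarrow> s' \<noteq> s \<Longrightarrow> rank W s' < rank W t"
    "\<And>t'. t' \<in> cobd K s \<Longrightarrow> t' \<noteq> t \<Longrightarrow> rank W s < rank W t'"
proof -
  obtain i where i: "i < length W" "W!i = Expand s t" using rp_index[OF rp] by blast
  have v: "valid_step (stage W i) (stage W (Suc i)) (W!i)" using m i unfolding morse_sequence_on_def by blast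
  hence v': "valid_step (stage W i) (stage W (Suc i)) (Expand s t)" using i by simp
  have sc: "simplicial_complex (stage W (Suc i))" and fp: "free_pair (stage W (Suc i)) s t"
    and pr: "stage W i = stage W (Suc i) - {s, t}" using v' by (simp_all only: valid_step.simps)
  have sub: "stage W (Suc i) \<subseteq> K" using stage_sub[OF m] .
  show st: "s \<subset> t" "s \<in> K" "t \<in> K" using fp sub by (auto simp: free_pair_def)
  show ft: "finite t" using sc_ne[OF sc] fp by (simp add: free_pair_def)
  then show fs: "finite s" using st finite_subset by blast
  obtain v where vv: "v \<in> t" "v \<notin> s" using st by blast
  have tS: "t \<in> stage W (Suc i)" using fp by (simp add: free_pair_def)
  have "insert v s \<in> stage W (Suc i)" using sc_closed[OF sc tS, of "insert v s"] vv st by blast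
  moreover have "s \<subseteq> insert v s" "insert v s \<noteq> s" using vv by auto
  ultimately have "insert v s = t" using fp unfolding free_pair_def by blast
  then show ct: "card t = Suc (card s)" using fs vv by auto
  have rs: "rank W s = Suc i" and rt: "rank W t = Suc i" using added_rank[OF m i(1)] i by auto
  then show "rank W s = rank W t" by simp
  have scK: "simplicial_complex K" using K_sc[OF m] st by blast
  show "rank W s' < rank W t" if a: "s' \<in> bd K t" "s' \<noteq> s" for s'
  proof -
    have s'K: "s' \<in> K" "s' \<subseteq> t" "Suc (card s') = card t" using a by (auto simp: bd_def)
    have "s' \<noteq> {}" using sc_ne[OF scK s'K(1)] by blast
    hence "s' \<in> stage W (Suc i)" using sc_closed[OF sc tS] s'K by blast
    moreover have "s' \<noteq> t" using s'K by auto
    ultimately have "s' \<in> stage W i" using pr a by auto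
    then show ?thesis using stage_rank[OF m s'K(1)] rt by simp
  qed
  show "rank W s < rank W t'" if a: "t' \<in> cobd K s" "t' \<noteq> t" for t'
  proof (rule ccontr)
    assume "\<not> ?thesis"
    hence "rank W t' \<le> Suc i" using rs by simp
    hence "t' \<in> stage W (Suc i)" using stage_rank[OF m] a by (auto simp: cobd_def)
    moreover have "s \<subseteq> t'" "t' \<noteq> s" using a by (auto simp: cobd_def)
    ultimately have "t' = t" using fp unfolding free_pair_def by blast
    then show False using a by simp
  qed
qed




lemma crit_index: "\<kappa> \<in> critical W \<Longrightarrow> \<exists>i<length W. W!i = Fill \<kappa>"
  by (auto simp: critical_def in_set_conv_nth)

lemma crit_not_lower:
  assumes m: "morse_sequence_on W K" and c: "\<kappa> \<in> critical W" shows "\<kappa> \<notin> lower_regular W"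
proof
  assume "\<kappa> \<in> lower_regular W"
  then obtain t where "regular_pair W \<kappa> t" by (auto simp: lower_regular_def)
  then obtain j where j: "j < length W" "W!j = Expand \<kappa> t" using rp_index by blast
  obtain i where i: "i < length W" "W!i = Fill \<kappa>" using crit_index[OF c] by blast
  have "i = j" using added_unique[OF m i(1) j(1), of \<kappa>] i j by simp
  then show False using i j by simp
qed

lemma crit_not_upper:
  assumes m: "morse_sequence_on W K" and c: "\<kappa> \<in> critical W" shows "\<kappa> \<notin> upper_regular W"
proof
  assume "\<kappa> \<in> upper_regular W"
  then obtain s where "regular_pair W s \<kappa>" by (auto simp: upper_regular_def)
  then obtain j where j: "j < length W" "W!j = Expand s \<kappa>" using rp_index by blast
  obtain i where i: "i < length W" "W!i = Fill \<kappa>" using crit_index[OF c] by blast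
  have "i = j" using added_unique[OF m i(1) j(1), of \<kappa>] i j by simp
  then show False using i j by simp
qed

lemma lower_not_upper:
  assumes m: "morse_sequence_on W K" and c: "regular_pair W s t" shows "s \<notin> upper_regular W"
proof
  assume "s \<in> upper_regular W"
  then obtain r where "regular_pair W r s" by (auto simp: upper_regular_def)
  then obtain j where j: "j < length W" "W!j = Expand r s" using rp_index by blast
  obtain i where i: "i < length W" "W!i = Expand s t" using rp_index[OF c] by blast
  have "i = j" using added_unique[OF m i(1) j(1), of s] i j by simp
  then have "s = t" using i j by simp
  then show False using rp_facts(1)[OF m c] by simp
qed

lemma rp_unique_t:
  assumes m: "morse_sequence_on W K" and "regular_pair W s t" "regular_pair W s t'" shows "t = t'"
proof -
  obtain j where j: "j < length W" "W!j = Expand s t'" using rp_index assms(3) by blast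
  obtain i where i: "i < length W" "W!i = Expand s t" using rp_index assms(2) by blast
  have "i = j" using added_unique[OF m i(1) j(1), of s] i j by simp
  then show ?thesis using i j by simp
qed

lemma rp_unique_s:
  assumes m: "morse_sequence_on W K" and "regular_pair W s t" "regular_pair W s' t" shows "s = s'"
proof -
  obtain j where j: "j < length W" "W!j = Expand s' t" using rp_index assms(3) by blast
  obtain i where i: "i < length W" "W!i = Expand s t" using rp_index assms(2) by blast
  have "i = j" using added_unique[OF m i(1) j(1), of t] i j by simp
  then show ?thesis using i j by simp
qed

lemma cover_aux: "st \<in> set W \<Longrightarrow> x \<in> added st \<Longrightarrow>
  x \<in> critical W \<or> (\<exists>t. regular_pair W x t) \<or> (\<exists>s. regular_pair W s x)"
  by (cases st) (auto simp: critical_def regular_pair_def)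

lemma cover3:
  assumes m: "morse_sequence_on W K" and x: "x \<in> K"
  shows "x \<in> critical W \<or> (\<exists>t. regular_pair W x t) \<or> (\<exists>s. regular_pair W s x)"
proof -
  obtain i where i: "i < length W" "x \<in> added (W!i)" using K_cover[OF m x] by blast
  have "W!i \<in> set W" using i by simp
  then show ?thesis using i(2) cover_aux by blast
qed

lemma odd_sum: "finite A \<Longrightarrow> odd (\<Sum>x\<in>A. (f x :: nat)) \<longleftrightarrow> odd (card {x\<in>A. odd (f x)})"
proof (induction A rule: finite_induct)
  case empty then show ?case by simp
next
  case (insert a A)
  show ?case
  proof (cases "odd (f a)")
    case True
    then have e: "{x\<in>insert a A. odd (f x)} = insert a {x\<in>A. odd (f x)}" by auto
    show ?thesis unfolding e using insert True by simp
  next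
    case False
    then have e: "{x\<in>insert a A. odd (f x)} = {x\<in>A. odd (f x)}" by auto
    show ?thesis unfolding e using insert False by simp
  qed
qed




lemma gp_cons_mem:
  assumes m: "morse_sequence_on W K" and rp: "regular_pair W a t"
    and s': "s' \<in> bd K t" "s' \<noteq> a" and mem: "(ss, ts) \<in> gradient_paths W K s' b"
  shows "(a#ss, t#ts) \<in> gradient_paths W K a b"
proof -
  obtain p where P: "length ss = length ts + 1" "ss ! 0 = s'" "ss ! length ts = b"
     "\<forall>i \<le> length ts. ss ! i \<in> K \<and> card (ss ! i) = p + 1"
     "\<forall>i < length ts. ts ! i \<in> K \<and> card (ts ! i) = p + 2 \<and>
        regular_pair W (ss ! i) (ts ! i) \<and> ss ! Suc i \<in> bd K (ts ! i) \<and> ss ! Suc i \<noteq> ss ! i"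
    using mem unfolding gradient_paths_def by blast
  have cs': "card s' = p + 1" using P(2,4) by auto
  have ct: "card t = p + 2" using s' cs' by (auto simp: bd_def)
  have ca: "card a = p + 1" using ct rp_facts(4)[OF m rp] by simp
  have aK: "a \<in> K" "t \<in> K" using rp_facts[OF m rp] by auto
  have A: "\<forall>i \<le> length (t#ts). (a#ss) ! i \<in> K \<and> card ((a#ss) ! i) = p + 1"
  proof (intro allI impI)
    fix i assume "i \<le> length (t#ts)"
    then show "(a#ss) ! i \<in> K \<and> card ((a#ss) ! i) = p + 1"
      using P(4) aK ca by (cases i) auto
  qed
  have B: "\<forall>i < length (t#ts). (t#ts) ! i \<in> K \<and> card ((t#ts) ! i) = p + 2 \<and>
        regular_pair W ((a#ss) ! i) ((t#ts) ! i) \<and> (a#ss) ! Suc i \<in> bd K ((t#ts) ! i) \<and> (a#ss) ! Suc i \<noteq> (a#ss) ! i"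
  proof (intro allI impI)
    fix i assume "i < length (t#ts)"
    then show "(t#ts) ! i \<in> K \<and> card ((t#ts) ! i) = p + 2 \<and>
        regular_pair W ((a#ss) ! i) ((t#ts) ! i) \<and> (a#ss) ! Suc i \<in> bd K ((t#ts) ! i) \<and> (a#ss) ! Suc i \<noteq> (a#ss) ! i"
      using P(5,2) aK ct rp s' by (cases i) auto
  qed
  show ?thesis unfolding gradient_paths_def using P(1,3) A B by auto
qed

lemma gp_decomp:
  assumes mem: "(ss, ts) \<in> gradient_paths W K a b"
  shows "(ts = [] \<and> ss = [a] \<and> a = b) \<or> (\<exists>t ts' ss' s'. ts = t#ts' \<and> ss = a#ss' \<and>
     regular_pair W a t \<and> s' \<in> bd K t \<and> s' \<noteq> a \<and> (ss', ts') \<in> gradient_paths W K s' b)"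
proof -
  obtain p where P: "length ss = length ts + 1" "ss ! 0 = a" "ss ! length ts = b"
     "\<forall>i \<le> length ts. ss ! i \<in> K \<and> card (ss ! i) = p + 1"
     "\<forall>i < length ts. ts ! i \<in> K \<and> card (ts ! i) = p + 2 \<and>
        regular_pair W (ss ! i) (ts ! i) \<and> ss ! Suc i \<in> bd K (ts ! i) \<and> ss ! Suc i \<noteq> ss ! i"
    using mem unfolding gradient_paths_def by blast
  show ?thesis
  proof (cases ts)
    case Nil
    then obtain x where "ss = [x]" using P(1) by (cases ss) auto
    then show ?thesis using Nil P by auto
  next
    case (Cons t ts')
    then obtain x ss' where ssd: "ss = x # ss'" using P(1) by (cases ss) auto
    have x: "x = a" using P(2) ssd by simp
    have l: "length ss' = length ts' + 1" using P(1) ssd Cons by simp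
    have T: "(ss', ts') \<in> gradient_paths W K (ss' ! 0) b"
    proof -
      have "\<forall>i \<le> length ts'. ss' ! i \<in> K \<and> card (ss' ! i) = p + 1"
        using P(4) ssd Cons by fastforce
      moreover have "\<forall>i < length ts'. ts' ! i \<in> K \<and> card (ts' ! i) = p + 2 \<and>
        regular_pair W (ss' ! i) (ts' ! i) \<and> ss' ! Suc i \<in> bd K (ts' ! i) \<and> ss' ! Suc i \<noteq> ss' ! i"
        using P(5) ssd Cons by fastforce
      moreover have "ss' ! length ts' = b" using P(3) ssd Cons by simp
      ultimately show ?thesis unfolding gradient_paths_def using l by blast
    qed
    have "regular_pair W a t" "ss' ! 0 \<in> bd K t" "ss' ! 0 \<noteq> a"
      using P(5) ssd Cons x by fastforce+
    then show ?thesis using T ssd x Cons by blast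
  qed
qed

lemma gp_triv:
  assumes m: "morse_sequence_on W K" and a: "a \<in> K"
  shows "([a], []) \<in> gradient_paths W K a a"
proof -
  have "simplicial_complex K" using K_sc[OF m] a by blast
  hence "card a > 0" using sc_ne a by (metis card_gt_0_iff)
  then show ?thesis unfolding gradient_paths_def
    by (auto intro!: exI[of _ "card a - 1"] simp: a)
qed

lemma gp_eq:
  assumes m: "morse_sequence_on W K" and a: "a \<in> K"
  shows "gradient_paths W K a b = (if a = b then {([a],[])} else {}) \<union>
    (\<Union>t\<in>{t. regular_pair W a t}. \<Union>s'\<in>bd K t - {a}. (\<lambda>(ss,ts). (a#ss, t#ts)) ` gradient_paths W K s' b)"
    (is "?L = ?R")
proof
  show "?L \<subseteq> ?R"
  proof
    fix x assume "x \<in> ?L"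
    then obtain ss ts where x: "x = (ss, ts)" "(ss, ts) \<in> ?L" by (cases x) auto
    from gp_decomp[OF x(2)] show "x \<in> ?R"
    proof
      assume "ts = [] \<and> ss = [a] \<and> a = b" then show ?thesis using x by simp
    next
      assume "\<exists>t ts' ss' s'. ts = t#ts' \<and> ss = a#ss' \<and>
        regular_pair W a t \<and> s' \<in> bd K t \<and> s' \<noteq> a \<and> (ss', ts') \<in> gradient_paths W K s' b"
      then obtain t ts' ss' s' where "ts = t#ts'" "ss = a#ss'"
        "regular_pair W a t" "s' \<in> bd K t" "s' \<noteq> a" "(ss', ts') \<in> gradient_paths W K s' b" by blast
      then show ?thesis using x by force
    qed
  qed
next
  show "?R \<subseteq> ?L"
  proof
    fix x assume "x \<in> ?R"
    then show "x \<in> ?L"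
    proof
      assume "x \<in> (if a = b then {([a],[])} else {})"
      then show ?thesis using gp_triv[OF m a] by (cases "a = b") auto
    next
      assume "x \<in> (\<Union>t\<in>{t. regular_pair W a t}. \<Union>s'\<in>bd K t - {a}. (\<lambda>(ss,ts). (a#ss, t#ts)) ` gradient_paths W K s' b)"
      then obtain t s' ss ts where "regular_pair W a t" "s' \<in> bd K t" "s' \<noteq> a"
        "(ss, ts) \<in> gradient_paths W K s' b" "x = (a#ss, t#ts)" by auto
      then show ?thesis using gp_cons_mem[OF m] by blast
    qed
  qed
qed




lemma added_finite: "finite (added s)" by (cases s) auto

lemma K_finite: assumes m: "morse_sequence_on W K" shows "finite K"
proof -
  have "K = (\<Union>s\<in>set W. added s)" using m stage_len[of W] by (simp add: morse_sequence_on_def)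
  then show ?thesis using added_finite by auto
qed

lemma bd_finite: "morse_sequence_on W K \<Longrightarrow> finite (bd K t)"
  by (rule finite_subset[of _ K]) (auto simp: bd_def K_finite)

lemma cobd_finite: "morse_sequence_on W K \<Longrightarrow> finite (cobd K t)"
  by (rule finite_subset[of _ K]) (auto simp: cobd_def K_finite)

lemma grad_main:
  assumes m: "morse_sequence_on W K" and r: "is_reference_map W K ref" and b: "b \<in> critical W"
  shows "a \<in> K \<Longrightarrow> finite (gradient_paths W K a b) \<and> (b \<in> ref a \<longleftrightarrow> odd (card (gradient_paths W K a b)))"
proof (induction "rank W a" arbitrary: a rule: less_induct)
  case less
  note aK = less.prems
  note eq = gp_eq[OF m aK, of b]
  show ?case
  proof (cases "\<exists>t. regular_pair W a t")
    case False
    then have e: "gradient_paths W K a b = (if a = b then {([a],[])} else {})" using eq by simp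
    show ?thesis
    proof (cases "a \<in> critical W")
      case True
      then have "ref a = {a}" using r by (simp add: is_reference_map_def)
      then show ?thesis using e by auto
    next
      case nc: False
      then obtain s where "regular_pair W s a" using cover3[OF m aK] False by blast
      then have up: "a \<in> upper_regular W" by (auto simp: upper_regular_def)
      then have "ref a = {}" using r by (simp add: is_reference_map_def)
      moreover have "a \<noteq> b" using crit_not_upper[OF m b] up by blast
      ultimately show ?thesis using e by auto
    qed
  next
    case True
    then obtain t where rp: "regular_pair W a t" by blast
    have ab: "a \<noteq> b" using crit_not_lower[OF m b] rp by (auto simp: lower_regular_def)
    have tt: "{t'. regular_pair W a t'} = {t}" using rp rp_unique_t[OF m rp] by blast
    define A where "A = bd K t - {a}"
    have fA: "finite A" using bd_finite[OF m] by (simp add: A_def)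
    have e: "gradient_paths W K a b = (\<Union>s'\<in>A. (\<lambda>(ss,ts). (a#ss, t#ts)) ` gradient_paths W K s' b)"
      using eq ab tt by (simp add: A_def)
    have IH: "finite (gradient_paths W K s' b) \<and> (b \<in> ref s' \<longleftrightarrow> odd (card (gradient_paths W K s' b)))"
      if "s' \<in> A" for s'
    proof -
      have "s' \<in> K" using that by (auto simp: A_def bd_def)
      moreover have "rank W s' < rank W a" using rp_facts(7,8)[OF m rp] that by (auto simp: A_def)
      ultimately show ?thesis using less.hyps by blast
    qed
    have inj: "inj_on (\<lambda>(ss,ts). (a#ss, t#ts)) X" for X by (auto simp: inj_on_def)
    have disj: "((\<lambda>(ss,ts). (a#ss, t#ts)) ` gradient_paths W K s1 b) \<inter> ((\<lambda>(ss,ts). (a#ss, t#ts)) ` gradient_paths W K s2 b) = {}"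
      if "s1 \<noteq> s2" for s1 s2
      using that by (auto simp: gradient_paths_def)
    have fin: "finite (gradient_paths W K a b)" unfolding e using fA IH by auto
    have card: "card (gradient_paths W K a b) = (\<Sum>s'\<in>A. card (gradient_paths W K s' b))"
      unfolding e
      apply (subst card_UN_disjoint)
      using fA IH disj apply auto[3]
      apply (rule sum.cong[OF refl])
      apply (subst card_image[OF inj]) by simp
    have up: "t \<in> upper_regular W" using rp by (auto simp: upper_regular_def)
    then have "lin ref (bd K t) = {}" using r by (simp add: is_reference_map_def)
    then have ev: "even (card {\<nu> \<in> bd K t. b \<in> ref \<nu>})" by (auto simp: lin_def)
    have abd: "a \<in> bd K t" using rp_facts[OF m rp] by (auto simp: bd_def)
    have "{\<nu> \<in> bd K t. b \<in> ref \<nu>} = (if b \<in> ref a then insert a {\<nu> \<in> A. b \<in> ref \<nu>} else {\<nu> \<in> A. b \<in> ref \<nu>})"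
      using abd by (auto simp: A_def)
    moreover have "finite {\<nu> \<in> A. b \<in> ref \<nu>}" using fA by simp
    ultimately have "b \<in> ref a \<longleftrightarrow> odd (card {\<nu> \<in> A. b \<in> ref \<nu>})"
      using ev by (cases "b \<in> ref a") (auto simp: A_def)
    also have "{\<nu> \<in> A. b \<in> ref \<nu>} = {\<nu> \<in> A. odd (card (gradient_paths W K \<nu> b))}"
      using IH by blast
    also have "odd (card \<dots>) \<longleftrightarrow> odd (card (gradient_paths W K a b))"
      unfolding card using odd_sum[OF fA] by simp
    finally show ?thesis using fin by simp
  qed
qed




lemma cg_end: "(ts, ss) \<in> cogradient_paths W K a t \<Longrightarrow> ts ! length ss = t"
  unfolding cogradient_paths_def by blast

lemma cg_snoc_mem:
  assumes m: "morse_sequence_on W K" and rp: "regular_pair W s b"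
    and t': "t' \<in> cobd K s" "t' \<noteq> b" and mem: "(ts, ss) \<in> cogradient_paths W K a t'"
  shows "(ts @ [b], ss @ [s]) \<in> cogradient_paths W K a b"
proof -
  obtain p where P: "length ts = length ss + 1" "ts ! 0 = a" "ts ! length ss = t'"
     "\<forall>i \<le> length ss. ts ! i \<in> K \<and> card (ts ! i) = p + 1"
     "\<forall>i < length ss. ss ! i \<in> K \<and> card (ss ! i) + 1 = p + 1 \<and>
        regular_pair W (ss ! i) (ts ! Suc i) \<and> ts ! i \<in> cobd K (ss ! i) \<and> ts ! Suc i \<noteq> ts ! i"
    using mem unfolding cogradient_paths_def by blast
  have ct': "card t' = p + 1" using P(3,4) by auto
  have cs: "card s + 1 = p + 1" using t' ct' by (auto simp: cobd_def)
  have cb: "card b = p + 1" using cs rp_facts(4)[OF m rp] by simp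
  have bK: "s \<in> K" "b \<in> K" using rp_facts[OF m rp] by auto
  have A: "\<forall>i \<le> length (ss @ [s]). (ts @ [b]) ! i \<in> K \<and> card ((ts @ [b]) ! i) = p + 1"
  proof (intro allI impI)
    fix i assume i: "i \<le> length (ss @ [s])"
    show "(ts @ [b]) ! i \<in> K \<and> card ((ts @ [b]) ! i) = p + 1"
    proof (cases "i < length ts")
      case True then show ?thesis using P(1,4) by (simp add: nth_append)
    next
      case False then have "i = length ts" using i P(1) by simp
      then show ?thesis using bK cb by simp
    qed
  qed
  have B: "\<forall>i < length (ss @ [s]). (ss @ [s]) ! i \<in> K \<and> card ((ss @ [s]) ! i) + 1 = p + 1 \<and>
        regular_pair W ((ss @ [s]) ! i) ((ts @ [b]) ! Suc i) \<and> (ts @ [b]) ! i \<in> cobd K ((ss @ [s]) ! i)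
        \<and> (ts @ [b]) ! Suc i \<noteq> (ts @ [b]) ! i"
  proof (intro allI impI)
    fix i assume i: "i < length (ss @ [s])"
    show "(ss @ [s]) ! i \<in> K \<and> card ((ss @ [s]) ! i) + 1 = p + 1 \<and>
        regular_pair W ((ss @ [s]) ! i) ((ts @ [b]) ! Suc i) \<and> (ts @ [b]) ! i \<in> cobd K ((ss @ [s]) ! i)
        \<and> (ts @ [b]) ! Suc i \<noteq> (ts @ [b]) ! i"
    proof (cases "i < length ss")
      case True then show ?thesis using P(1,5) by (simp add: nth_append)
    next
      case False then have "i = length ss" using i by simp
      then show ?thesis using bK cs rp t' P(1,3) by (simp add: nth_append)
    qed
  qed
  have "(ts @ [b]) ! 0 = a" using P(1,2) by (simp add: nth_append)
  moreover have "(ts @ [b]) ! length (ss @ [s]) = b" using P(1) by (simp add: nth_append)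
  ultimately show ?thesis unfolding cogradient_paths_def using P(1) A B
    by (intro CollectI case_prodI exI[of _ p]) simp
qed

lemma cg_decomp:
  assumes mem: "(ts, ss) \<in> cogradient_paths W K a b"
  shows "(ss = [] \<and> ts = [a] \<and> a = b) \<or> (\<exists>ts' ss' s t'. ts = ts' @ [b] \<and> ss = ss' @ [s] \<and>
     regular_pair W s b \<and> t' \<in> cobd K s \<and> t' \<noteq> b \<and> (ts', ss') \<in> cogradient_paths W K a t')"
proof -
  obtain p where P: "length ts = length ss + 1" "ts ! 0 = a" "ts ! length ss = b"
     "\<forall>i \<le> length ss. ts ! i \<in> K \<and> card (ts ! i) = p + 1"
     "\<forall>i < length ss. ss ! i \<in> K \<and> card (ss ! i) + 1 = p + 1 \<and>
        regular_pair W (ss ! i) (ts ! Suc i) \<and> ts ! i \<in> cobd K (ss ! i) \<and> ts ! Suc i \<noteq> ts ! i"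
    using mem unfolding cogradient_paths_def by blast
  show ?thesis
  proof (cases ss rule: rev_cases)
    case Nil
    then obtain x where "ts = [x]" using P(1) by (cases ts) auto
    then show ?thesis using Nil P by auto
  next
    case (snoc ss' s)
    then obtain ts' x where tsd: "ts = ts' @ [x]" using P(1) by (cases ts rule: rev_cases) auto
    have l: "length ts' = length ss' + 1" using P(1) tsd snoc by simp
    have x: "x = b" using P(3) tsd snoc l by (simp add: nth_append)
    have T: "(ts', ss') \<in> cogradient_paths W K a (ts' ! length ss')"
    proof -
      have "\<forall>i \<le> length ss'. ts' ! i \<in> K \<and> card (ts' ! i) = p + 1"
      proof (intro allI impI)
        fix i assume "i \<le> length ss'"
        then show "ts' ! i \<in> K \<and> card (ts' ! i) = p + 1"
          using P(4) tsd snoc l spec[OF P(4), of i] by (simp add: nth_append)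
      qed
      moreover have "\<forall>i < length ss'. ss' ! i \<in> K \<and> card (ss' ! i) + 1 = p + 1 \<and>
        regular_pair W (ss' ! i) (ts' ! Suc i) \<and> ts' ! i \<in> cobd K (ss' ! i) \<and> ts' ! Suc i \<noteq> ts' ! i"
      proof (intro allI impI)
        fix i assume "i < length ss'"
        then show "ss' ! i \<in> K \<and> card (ss' ! i) + 1 = p + 1 \<and>
          regular_pair W (ss' ! i) (ts' ! Suc i) \<and> ts' ! i \<in> cobd K (ss' ! i) \<and> ts' ! Suc i \<noteq> ts' ! i"
          using tsd snoc l spec[OF P(5), of i] by (simp add: nth_append)
      qed
      moreover have "ts' ! 0 = a" using P(2) tsd l by (simp add: nth_append)
      ultimately show ?thesis unfolding cogradient_paths_def using l by blast
    qed
    have "regular_pair W s b" "ts' ! length ss' \<in> cobd K s" "ts' ! length ss' \<noteq> b"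
      using spec[OF P(5), of "length ss'"] tsd snoc l x by (auto simp add: nth_append)
    then show ?thesis using T tsd snoc x by blast
  qed
qed

lemma cg_triv:
  assumes m: "morse_sequence_on W K" and a: "a \<in> K"
  shows "([a], []) \<in> cogradient_paths W K a a"
proof -
  have "simplicial_complex K" using K_sc[OF m] a by blast
  hence "card a > 0" using sc_ne a by (metis card_gt_0_iff)
  then show ?thesis unfolding cogradient_paths_def
    by (auto intro!: exI[of _ "card a - 1"] simp: a)
qed

lemma cg_eq:
  assumes m: "morse_sequence_on W K" and bK: "b \<in> K"
  shows "cogradient_paths W K a b = (if a = b then {([a],[])} else {}) \<union>
    (\<Union>s\<in>{s. regular_pair W s b}. \<Union>t'\<in>cobd K s - {b}. (\<lambda>(ts,ss). (ts @ [b], ss @ [s])) ` cogradient_paths W K a t')"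
    (is "?L = ?R")
proof
  show "?L \<subseteq> ?R"
  proof
    fix x assume "x \<in> ?L"
    then obtain ts ss where x: "x = (ts, ss)" "(ts, ss) \<in> ?L" by (cases x) auto
    from cg_decomp[OF x(2)] show "x \<in> ?R"
    proof
      assume "ss = [] \<and> ts = [a] \<and> a = b" then show ?thesis using x by simp
    next
      assume "\<exists>ts' ss' s t'. ts = ts' @ [b] \<and> ss = ss' @ [s] \<and>
     regular_pair W s b \<and> t' \<in> cobd K s \<and> t' \<noteq> b \<and> (ts', ss') \<in> cogradient_paths W K a t'"
      then obtain ts' ss' s t' where "ts = ts' @ [b]" "ss = ss' @ [s]"
        "regular_pair W s b" "t' \<in> cobd K s" "t' \<noteq> b" "(ts', ss') \<in> cogradient_paths W K a t'" by blast
      then show ?thesis using x by force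
    qed
  qed
next
  show "?R \<subseteq> ?L"
  proof
    fix x assume "x \<in> ?R"
    then show "x \<in> ?L"
    proof
      assume "x \<in> (if a = b then {([a],[])} else {})"
      then show ?thesis using cg_triv[OF m, of a] bK by (cases "a = b") auto
    next
      assume "x \<in> (\<Union>s\<in>{s. regular_pair W s b}. \<Union>t'\<in>cobd K s - {b}. (\<lambda>(ts,ss). (ts @ [b], ss @ [s])) ` cogradient_paths W K a t')"
      then obtain s t' ts ss where "regular_pair W s b" "t' \<in> cobd K s" "t' \<noteq> b"
        "(ts, ss) \<in> cogradient_paths W K a t'" "x = (ts @ [b], ss @ [s])" by auto
      then show ?thesis using cg_snoc_mem[OF m] by blast
    qed
  qed
qed

lemma rank_le: assumes m: "morse_sequence_on W K" and x: "x \<in> K" shows "rank W x \<le> length W"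
  using K_cover[OF m x] added_rank[OF m] by fastforce

lemma cograd_main:
  assumes m: "morse_sequence_on W K" and r: "is_coreference_map W K coref" and a: "a \<in> critical W"
  shows "b \<in> K \<Longrightarrow> finite (cogradient_paths W K a b) \<and> (a \<in> coref b \<longleftrightarrow> odd (card (cogradient_paths W K a b)))"
proof (induction "length W - rank W b" arbitrary: b rule: less_induct)
  case less
  note bK = less.prems
  note eq = cg_eq[OF m bK, of a]
  show ?case
  proof (cases "\<exists>s. regular_pair W s b")
    case False
    then have e: "cogradient_paths W K a b = (if a = b then {([a],[])} else {})" using eq by simp
    show ?thesis
    proof (cases "b \<in> critical W")
      case True
      then have "coref b = {b}" using r by (simp add: is_coreference_map_def)
      then show ?thesis using e by auto
    next
      case nc: False
      then obtain t where "regular_pair W b t" using cover3[OF m bK] False by blast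
      then have lo: "b \<in> lower_regular W" by (auto simp: lower_regular_def)
      then have "coref b = {}" using r by (simp add: is_coreference_map_def)
      moreover have "a \<noteq> b" using crit_not_lower[OF m a] lo by blast
      ultimately show ?thesis using e by auto
    qed
  next
    case True
    then obtain s where rp: "regular_pair W s b" by blast
    have ab: "a \<noteq> b" using crit_not_upper[OF m a] rp by (auto simp: upper_regular_def)
    have ss: "{s'. regular_pair W s' b} = {s}" using rp rp_unique_s[OF m rp] by blast
    define A where "A = cobd K s - {b}"
    have fA: "finite A" using cobd_finite[OF m] by (simp add: A_def)
    have e: "cogradient_paths W K a b = (\<Union>t'\<in>A. (\<lambda>(ts,ss). (ts @ [b], ss @ [s])) ` cogradient_paths W K a t')"
      using eq ab ss by (simp add: A_def)
    have IH: "finite (cogradient_paths W K a t') \<and> (a \<in> coref t' \<longleftrightarrow> odd (card (cogradient_paths W K a t')))"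
      if "t' \<in> A" for t'
    proof -
      have tK: "t' \<in> K" using that by (auto simp: A_def cobd_def)
      moreover have "rank W b < rank W t'" using rp_facts(7,9)[OF m rp] that by (auto simp: A_def)
      moreover have "rank W t' \<le> length W" using rank_le[OF m tK] .
      ultimately have "length W - rank W t' < length W - rank W b" by linarith
      then show ?thesis using less.hyps tK by blast
    qed
    have inj: "inj_on (\<lambda>(ts,ss). (ts @ [b], ss @ [s])) X" for X by (auto simp: inj_on_def)
    have disj: "((\<lambda>(ts,ss). (ts @ [b], ss @ [s])) ` cogradient_paths W K a s1) \<inter> ((\<lambda>(ts,ss). (ts @ [b], ss @ [s])) ` cogradient_paths W K a s2) = {}"
      if "s1 \<noteq> s2" for s1 s2
    proof (rule ccontr)
      assume "\<not> ?thesis"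
      then obtain x where x1: "x \<in> (\<lambda>(ts,ss). (ts @ [b], ss @ [s])) ` cogradient_paths W K a s1"
        and x2: "x \<in> (\<lambda>(ts,ss). (ts @ [b], ss @ [s])) ` cogradient_paths W K a s2" by blast
      from x1 obtain ts1 ss1 where y1: "(ts1, ss1) \<in> cogradient_paths W K a s1" "x = (ts1 @ [b], ss1 @ [s])"
        by auto
      from x2 obtain ts2 ss2 where y2: "(ts2, ss2) \<in> cogradient_paths W K a s2" "x = (ts2 @ [b], ss2 @ [s])"
        by auto
      have "ts1 = ts2" "ss1 = ss2" using y1(2) y2(2) by simp_all
      then have "s1 = s2" using cg_end[OF y1(1)] cg_end[OF y2(1)] by simp
      then show False using that by simp
    qed
    have fin: "finite (cogradient_paths W K a b)" unfolding e using fA IH by auto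
    have card: "card (cogradient_paths W K a b) = (\<Sum>t'\<in>A. card (cogradient_paths W K a t'))"
      unfolding e
      apply (subst card_UN_disjoint)
      using fA IH disj apply auto[3]
      apply (rule sum.cong[OF refl])
      apply (subst card_image[OF inj]) by simp
    have lo: "s \<in> lower_regular W" using rp by (auto simp: lower_regular_def)
    then have "lin coref (cobd K s) = {}" using r by (simp add: is_coreference_map_def)
    then have ev: "even (card {\<nu> \<in> cobd K s. a \<in> coref \<nu>})" by (auto simp: lin_def)
    have bcbd: "b \<in> cobd K s" using rp_facts[OF m rp] by (auto simp: cobd_def)
    have "{\<nu> \<in> cobd K s. a \<in> coref \<nu>} = (if a \<in> coref b then insert b {\<nu> \<in> A. a \<in> coref \<nu>} else {\<nu> \<in> A. a \<in> coref \<nu>})"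
      using bcbd by (auto simp: A_def)
    moreover have "finite {\<nu> \<in> A. a \<in> coref \<nu>}" using fA by simp
    ultimately have "a \<in> coref b \<longleftrightarrow> odd (card {\<nu> \<in> A. a \<in> coref \<nu>})"
      using ev by (cases "a \<in> coref b") (auto simp: A_def)
    also have "{\<nu> \<in> A. a \<in> coref \<nu>} = {\<nu> \<in> A. odd (card (cogradient_paths W K a \<nu>))}"
      using IH by blast
    also have "odd (card \<dots>) \<longleftrightarrow> odd (card (cogradient_paths W K a b))"
      unfolding card using odd_sum[OF fA] by simp
    finally show ?thesis using fin by simp
  qed
qed


theorem theorem2:
  fixes W :: "'a step list" and K :: "'a set set"
    and ref coref :: "'a set \<Rightarrow> 'a set set" and \<kappa> \<nu> :: "'a set"
  assumes "morse_sequence_on W K"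
    and "is_reference_map W K ref"
    and "is_coreference_map W K coref"
    and "\<kappa> \<in> critical W"
    and "\<nu> \<in> K"
  shows "(\<kappa> \<in> ref \<nu> \<longleftrightarrow> odd (card (gradient_paths W K \<nu> \<kappa>))) \<and>
         (\<kappa> \<in> coref \<nu> \<longleftrightarrow> odd (card (cogradient_paths W K \<kappa> \<nu>)))"
  using grad_main[OF assms(1,2,4) assms(5)] cograd_main[OF assms(1,3,4) assms(5)] by blast

end
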